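(* Let $H$ be an infinite-dimensional real Hilbert space. Then for every integer $m\ge1$ and every $\alpha\in(0,1/3]$, $$\tfrac12 m^{-\alpha/2}\le \gamma_m(\alpha,H)\le m^{-\alpha/2}.$$
   Context: A (symmetric) dictionary in $H$ is a set $\mathcal D$ of unit vectors with dense span and $g\in\mathcal D\Rightarrow -g\in\mathcal D$. $A_1(\mathcal D)$ is the closed convex hull of $\mathcal D$ and $\|f\|_{A_1(\mathcal D)}:=\inf\{M:f/M\in A_1(\mathcal D)\}$. Pure Greedy Algorithm (PGA): for $f\in H$ let $g(f)\in\mathcal D$ be an element maximizing $\langle f,g\rangle$ over $\mathcal D$ (assumed to exist); $f_0:=f$, $G_0(f,\mathcal D):=0$, $G_m(f,\mathcal D):=G_{m-1}(f,\mathcal D)+\langle f_{m-1},g(f_{m-1})\rangle g(f_{m-1})$, $f_m:=f-G_m(f,\mathcal D)$. For $\alpha\in(0,1]$, $$\gamma_m(\alpha,H):=\sup_{\{G_m(f,\mathcal D)\},f,\mathcal D}\frac{\|f-G_m(f,\mathcal D)\|}{\|f\|^{1-\alpha}\|f\|_{A_1(\mathcal D)}^{\alpha}},$$ supremum over all dictionaries $\mathcal D$, all $f\ne0$ with $\|f\|_{A_1(\mathcal D)}<\infty$, and all possible realizations of the PGA. *)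

theory Defs
  imports "HOL-Analysis.Analysis"
begin

definition dictionary :: "'a::real_inner set \<Rightarrow> bool" where
  "dictionary D \<longleftrightarrow> (\<forall>g\<in>D. norm g = 1) \<and> closure (span D) = UNIV \<and> (\<forall>g\<in>D. - g \<in> D)"

definition A1 :: "'a::real_inner set \<Rightarrow> 'a set" where
  "A1 D = closure (convex hull D)"

definition A1_scales :: "'a::real_inner set \<Rightarrow> 'a \<Rightarrow> real set" where
  "A1_scales D f = {M. 0 < M \<and> scaleR (inverse M) f \<in> A1 D}"

definition A1_norm :: "'a::real_inner set \<Rightarrow> 'a \<Rightarrow> real" where
  "A1_norm D f = Inf (A1_scales D f)"

text \<open>A realization of the Pure Greedy Algorithm: r k is the residual f_k = f - G_k(f,D);
  at each step any maximizer g of inner (r k) over D may be chosen.\<close>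
definition pga_realization :: "'a::real_inner set \<Rightarrow> 'a \<Rightarrow> (nat \<Rightarrow> 'a) \<Rightarrow> bool" where
  "pga_realization D f r \<longleftrightarrow> r 0 = f \<and>
     (\<forall>k. \<exists>g\<in>D. (\<forall>h\<in>D. inner (r k) h \<le> inner (r k) g) \<and>
                 r (Suc k) = r k - scaleR (inner (r k) g) g)"

definition gamma_pga :: "nat \<Rightarrow> real \<Rightarrow> 'a::real_inner itself \<Rightarrow> ereal" where
  "gamma_pga m \<alpha> _ =
     (SUP x \<in> {(D :: 'a set, f :: 'a, r :: nat \<Rightarrow> 'a).
                 dictionary D \<and> f \<noteq> 0 \<and> A1_scales D f \<noteq> {} \<and> pga_realization D f r}.
        (case x of (D, f, r) \<Rightarrow>
          ereal (norm (r m) / (norm f powr (1 - \<alpha>) * A1_norm D f powr \<alpha>))))"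

end

theory Submission imports Defs begin

lemma poly_aux: fixes t :: real assumes "0 \<le> t" "t \<le> 1"
  shows "(1 - t)^3 * (1 + 3*t) \<le> 1"
proof -
  have "1 - (1 - t)^3 * (1 + 3*t) = t^2 * (3*(t - 4/3)^2 + 2/3)"
    by (simp add: power2_eq_square power3_eq_cube algebra_simps)
  moreover have "t^2 * (3*(t - 4/3)^2 + 2/3) \<ge> 0" by simp
  ultimately show ?thesis by linarith
qed

lemma step_aux: fixes x x' P :: real
  assumes P: "P > 0" and x: "0 \<le> x" and x': "0 \<le> x'" and rec: "x' \<le> x - x^4/P^2"
    and sm: "x^3 \<le> P^2"
  shows "x'^3 * (P^2 + 3*x^3) \<le> x^3 * P^2"
proof -
  define t where "t = x^3/P^2"
  have t0: "0 \<le> t" "t \<le> 1" using sm P x by (auto simp: t_def)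
  have s: "x - x^4/P^2 = x * (1 - t)" using P by (simp add: t_def field_simps power_def)
  have "x'^3 \<le> (x*(1-t))^3" using rec x' s by (intro power_mono) auto
  hence "x'^3 * (P^2 + 3*x^3) \<le> (x*(1-t))^3 * (P^2 + 3*x^3)"
    by (intro mult_right_mono) (use x in auto)
  also have "\<dots> = x^3 * P^2 * ((1-t)^3 * (1 + 3*t))"
  proof -
    have "P^2 + 3*x^3 = P^2*(1+3*t)" using P by (simp add: t_def field_simps)
    thus ?thesis by (simp add: power_mult_distrib)
  qed
  also have "\<dots> \<le> x^3 * P^2 * 1"
    by (intro mult_left_mono poly_aux t0) (use x in auto)
  finally show ?thesis by simp
qed

lemma seq_aux: fixes x :: "nat \<Rightarrow> real" and P :: real
  assumes P: "P > 0" and x: "\<And>k. 0 \<le> x k" and rec: "\<And>k. x (Suc k) \<le> x k - x k^4/P^2"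
    and sm: "\<And>k. x k^3 \<le> P^2"
  shows "3 * real k * x k ^ 3 \<le> P^2"
proof -
  have "x k = 0 \<or> 3 * real k / P^2 \<le> 1 / x k ^ 3"
  proof (induction k)
    case 0 then show ?case using x[of 0] by simp
  next
    case (Suc k)
    show ?case
    proof (cases "x (Suc k) = 0")
      case False
      hence pos1: "x (Suc k) > 0" using x[of "Suc k"] by simp
      have "x k ^4/P^2 \<ge> 0" by simp
      hence pos0: "x k > 0" using rec[of k] pos1 by linarith
      have key: "x (Suc k)^3 * (P^2 + 3*x k^3) \<le> x k^3 * P^2"
        by (rule step_aux[OF P x x rec sm])
      have IH: "3 * real k / P^2 \<le> 1 / x k ^ 3" using Suc pos0 by auto
      have "1 / x (Suc k)^3 \<ge> (P^2 + 3*x k^3) / (x k^3 * P^2)"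
        using key pos0 pos1 P by (simp add: field_simps)
      also have "(P^2 + 3*x k^3) / (x k^3 * P^2) = 1 / x k^3 + 3 / P^2"
        using pos0 P by (simp add: field_simps)
      finally have "1 / x (Suc k)^3 \<ge> 1 / x k^3 + 3 / P^2" .
      moreover have "3 * real (Suc k) / P^2 = 3 * real k / P^2 + 3/P^2"
        by (simp add: add_divide_distrib[symmetric] algebra_simps)
      ultimately show ?thesis using IH by auto
    qed simp
  qed
  thus ?thesis
  proof
    assume h: "3 * real k / P^2 \<le> 1 / x k ^ 3"
    show ?thesis
    proof (cases "x k = 0")
      case False
      hence "x k > 0" using x[of k] by simp
      thus ?thesis using h P by (simp add: field_simps)
    qed simp
  qed simp
qed


lemma A1_halfspace:
  assumes "\<And>h. h \<in> D \<Longrightarrow> inner x h \<le> c" "\<phi> \<in> A1 D"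
  shows "inner x \<phi> \<le> c"
proof -
  have "convex hull D \<subseteq> {y. inner x y \<le> c}"
    by (rule hull_minimal) (use assms(1) convex_halfspace_le in auto)
  hence "closure (convex hull D) \<subseteq> {y. inner x y \<le> c}"
    by (rule closure_minimal) (rule closed_halfspace_le)
  thus ?thesis using assms(2) by (auto simp: A1_def)
qed

lemma A1_norm_le:
  assumes "\<And>h. h \<in> D \<Longrightarrow> norm h = 1" "\<phi> \<in> A1 D"
  shows "norm \<phi> \<le> 1"
proof -
  have "convex hull D \<subseteq> cball 0 1"
    by (rule hull_minimal) (use assms(1) in auto)
  hence "closure (convex hull D) \<subseteq> cball 0 1"
    by (rule closure_minimal) simp
  thus ?thesis using assms(2) by (auto simp: A1_def)
qed

lemma pga_upper:
  fixes D :: "'a::real_inner set"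
  assumes dict: "dictionary D" and f0: "f \<noteq> 0" and sc: "A1_scales D f \<noteq> {}"
    and pga: "pga_realization D f r"
  shows "3 * real m * norm (r m) ^ 6 \<le> norm f ^ 4 * A1_norm D f ^ 2"
    and "norm f \<le> A1_norm D f"
    and "norm (r m) \<le> norm f"
proof -
  define M where "M = A1_norm D f"
  have unit: "\<And>h. h \<in> D \<Longrightarrow> norm h = 1" and symm: "\<And>h. h \<in> D \<Longrightarrow> -h \<in> D"
    using dict by (auto simp: dictionary_def)
  have bdd: "bdd_below (A1_scales D f)"
    by (rule bdd_belowI[of _ 0]) (auto simp: A1_scales_def)
  have nfM: "norm f \<le> M"
    unfolding M_def A1_norm_def
  proof (rule cInf_greatest[OF sc])
    fix M' assume "M' \<in> A1_scales D f"
    hence M': "M' > 0" "inverse M' *\<^sub>R f \<in> A1 D" by (auto simp: A1_scales_def)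
    have "norm (inverse M' *\<^sub>R f) \<le> 1" by (rule A1_norm_le[OF unit M'(2)])
    thus "norm f \<le> M'" using M'(1) by (simp add: field_simps)
  qed
  then show "norm f \<le> A1_norm D f" by (simp add: M_def)
  have nf: "norm f > 0" using f0 by simp
  have Mpos: "M > 0" using nf nfM by linarith
  have r0: "r 0 = f" using pga by (simp add: pga_realization_def)
  have "\<forall>k. \<exists>g. g \<in> D \<and> (\<forall>h\<in>D. inner (r k) h \<le> inner (r k) g) \<and>
                 r (Suc k) = r k - scaleR (inner (r k) g) g"
    using pga by (auto simp: pga_realization_def)
  then obtain g where g: "\<And>k. g k \<in> D" "\<And>k h. h \<in> D \<Longrightarrow> inner (r k) h \<le> inner (r k) (g k)"
     "\<And>k. r (Suc k) = r k - scaleR (inner (r k) (g k)) (g k)"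
    by metis
  define c where "c k = inner (r k) (g k)" for k
  have c0: "c k \<ge> 0" for k
    using g(2)[OF symm[OF g(1)[of k]], of k] by (simp add: c_def)
  have cabs: "\<bar>inner (r k) (g j)\<bar> \<le> c k" for k j
    using g(2)[OF symm[OF g(1)[of j]], of k] g(2)[OF g(1)[of j], of k] by (simp add: c_def)
  have gg: "inner (g k) (g k) = 1" for k
    using unit[OF g(1)[of k]] by (simp add: dot_square_norm)
  define a where "a k = norm (r k) ^ 2" for k
  have a0: "a k \<ge> 0" for k by (simp add: a_def)
  have astep: "a (Suc k) = a k - c k ^ 2" for k
    unfolding a_def g(3)[of k] power2_norm_eq_inner
    by (simp add: inner_diff_left inner_diff_right c_def gg inner_commute power2_eq_square)
  have rsum: "r k = f - (\<Sum>j<k. c j *\<^sub>R g j)" for k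
    by (induction k) (simp_all add: r0 g(3) c_def)
  have inf: "inner (r k) f \<le> c k * M" for k
  proof (cases "c k = 0")
    case True
    obtain M' where "M' \<in> A1_scales D f" using sc by blast
    hence M': "M' > 0" "inverse M' *\<^sub>R f \<in> A1 D" by (auto simp: A1_scales_def)
    have "inner (r k) (inverse M' *\<^sub>R f) \<le> c k"
      by (rule A1_halfspace[OF _ M'(2)]) (use g(2) c_def in auto)
    hence "inner (r k) f \<le> 0" using True M'(1)
      by (simp add: field_simps)
    thus ?thesis using True by simp
  next
    case False
    hence ck: "c k > 0" using c0[of k] by simp
    have "inner (r k) f / c k \<le> M"
      unfolding M_def A1_norm_def
    proof (rule cInf_greatest[OF sc])
      fix M' assume "M' \<in> A1_scales D f"
      hence M': "M' > 0" "inverse M' *\<^sub>R f \<in> A1 D" by (auto simp: A1_scales_def)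
      have "inner (r k) (inverse M' *\<^sub>R f) \<le> c k"
        by (rule A1_halfspace[OF _ M'(2)]) (use g(2) c_def in auto)
      thus "inner (r k) f / c k \<le> M'" using M'(1) ck by (simp add: field_simps)
    qed
    thus ?thesis using ck by (simp add: field_simps)
  qed
  define B where "B k = M + (\<Sum>j<k. c j)" for k
  have aB: "a k \<le> c k * B k" for k
  proof -
    have "a k = inner (r k) f - (\<Sum>j<k. c j * inner (r k) (g j))"
      unfolding a_def power2_norm_eq_inner
      by (subst (2) rsum) (simp add: inner_diff_right inner_sum_right)
    also have "\<dots> \<le> c k * M + (\<Sum>j<k. c j * c k)"
    proof -
      have "- (\<Sum>j<k. c j * inner (r k) (g j)) \<le> (\<Sum>j<k. c j * c k)"
        unfolding sum_negf[symmetric]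
      proof (rule sum_mono)
        fix j
        have "- inner (r k) (g j) \<le> c k" using cabs[of k j] by linarith
        from mult_left_mono[OF this c0[of j]] show "- (c j * inner (r k) (g j)) \<le> c j * c k" by simp
      qed
      thus ?thesis using inf[of k] by linarith
    qed
    also have "\<dots> = c k * B k" by (simp add: B_def algebra_simps sum_distrib_left)
    finally show ?thesis .
  qed
  have BM: "B k \<ge> M" for k unfolding B_def using c0 by (simp add: sum_nonneg)
  define P where "P = a 0 * M"
  have a00: "a 0 = norm f ^ 2" by (simp add: a_def r0)
  have Ppos: "P > 0" using nf Mpos by (simp add: P_def a00)
  have PB: "a k * B k \<le> P" for k
  proof (induction k)
    case 0 then show ?case by (simp add: P_def B_def)
  next
    case (Suc k)
    have "a (Suc k) * B (Suc k) = (a k - c k^2) * (B k + c k)"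
      by (simp add: astep B_def)
    also have "\<dots> = a k * B k + c k * (a k - c k * B k) - c k ^ 3"
      by (simp add: algebra_simps power2_eq_square power3_eq_cube)
    also have "\<dots> \<le> a k * B k"
    proof -
      have "c k * (a k - c k * B k) \<le> 0"
        using aB[of k] c0[of k] by (simp add: mult_nonneg_nonpos)
      moreover have "c k ^ 3 \<ge> 0" using c0[of k] by simp
      ultimately show ?thesis by linarith
    qed
    finally show ?case using Suc by linarith
  qed
  have adec: "a k \<le> a 0" for k
  proof (induction k)
    case (Suc k) then show ?case using astep[of k] using zero_le_power2[of "c k"] by linarith
  qed simp
  show "norm (r m) \<le> norm f"
  proof -
    have "a m \<le> a 0" by (rule adec)
    hence "norm (r m) ^ 2 \<le> norm f ^ 2" unfolding a_def r0 .
    thus ?thesis by (rule power2_le_imp_le) simp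
  qed
  have cP: "a k ^ 2 \<le> c k * P" for k
  proof -
    have "a k * a k \<le> a k * (c k * B k)" by (rule mult_left_mono[OF aB a0])
    also have "\<dots> = c k * (a k * B k)" by simp
    also have "\<dots> \<le> c k * P" by (rule mult_left_mono[OF PB c0])
    finally show ?thesis by (simp add: power2_eq_square)
  qed
  have rec: "a (Suc k) \<le> a k - a k ^ 4 / P ^ 2" for k
  proof -
    have "a k ^ 2 / P \<le> c k" using cP[of k] Ppos by (simp add: field_simps)
    hence "(a k ^ 2 / P)^2 \<le> c k ^ 2" by (intro power_mono) (use Ppos in simp_all)
    hence "a k ^ 4 / P^2 \<le> c k ^ 2" by (simp add: power_divide power_mult[symmetric])
    thus ?thesis using astep[of k] by linarith
  qed
  have sm: "a k ^ 3 \<le> P ^ 2" for k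
  proof -
    have "a k ^ 3 \<le> a 0 ^ 3" by (intro power_mono adec a0)
    also have "\<dots> = a 0 ^ 2 * a 0" by (simp add: power_def)
    also have "\<dots> \<le> a 0 ^ 2 * M ^ 2"
    proof (intro mult_left_mono)
      show "a 0 \<le> M^2" unfolding a00 by (intro power_mono nfM) simp
    qed simp
    also have "\<dots> = P^2" by (simp add: P_def power_mult_distrib)
    finally show ?thesis .
  qed
  have "3 * real m * a m ^ 3 \<le> P ^ 2" by (rule seq_aux[of P a, OF Ppos a0 rec sm])
  moreover have "a m ^ 3 = norm (r m) ^ 6" by (simp add: a_def power_mult[symmetric])
  moreover have "P ^ 2 = norm f ^ 4 * M ^ 2" by (simp add: P_def a00 power_mult_distrib power_mult[symmetric])
  ultimately show "3 * real m * norm (r m) ^ 6 \<le> norm f ^ 4 * A1_norm D f ^ 2" by (simp add: M_def)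
qed


lemma final_upper:
  fixes n M \<rho> \<alpha> :: real and m :: nat
  assumes n: "n > 0" and nM: "n \<le> M" and \<rho>0: "0 \<le> \<rho>" and \<rho>n: "\<rho> \<le> n"
    and key: "3 * real m * \<rho>^6 \<le> n^4 * M^2" and m: "m \<ge> 1"
    and \<alpha>: "0 < \<alpha>" "\<alpha> \<le> 1/3"
  shows "\<rho> / (n powr (1 - \<alpha>) * M powr \<alpha>) \<le> real m powr (- \<alpha> / 2)"
proof -
  have M: "M > 0" using n nM by linarith
  have mpos: "real m > 0" using m by simp
  define q where "q = M / (n * sqrt (real m))"
  have qpos: "q > 0" using M n mpos by (simp add: q_def)
  define T where "T = real m powr (- \<alpha> / 2) * (n powr (1 - \<alpha>) * M powr \<alpha>)"
  have sq: "sqrt (real m) powr \<alpha> = real m powr (\<alpha>/2)"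
    using mpos by (simp add: powr_half_sqrt[symmetric] powr_powr)
  have e1: "q powr \<alpha> = M powr \<alpha> / (n powr \<alpha> * real m powr (\<alpha>/2))"
    unfolding q_def by (simp add: powr_divide powr_mult sq)
  have e2: "n powr (1 - \<alpha>) = n / n powr \<alpha>" using n by (simp add: powr_diff)
  have e3: "real m powr (- \<alpha> / 2) = inverse (real m powr (\<alpha>/2))"
    using powr_minus[of "real m" "\<alpha>/2"] by simp
  have p1: "n powr \<alpha> > 0" "real m powr (\<alpha>/2) > 0" using n mpos by auto
  have T: "T = n * q powr \<alpha>"
    unfolding T_def e1 e2 e3 using p1 by (simp add: field_simps)
  have "\<rho> \<le> T"
  proof (cases "q \<ge> 1")
    case True
    hence "1 \<le> q powr \<alpha>" using \<alpha> by (intro ge_one_powr_ge_zero) auto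
    hence "n * 1 \<le> n * q powr \<alpha>" using n by (intro mult_left_mono) auto
    thus ?thesis using \<rho>n T by simp
  next
    case False
    have q13: "q powr (1/3) \<le> q powr \<alpha>" using False qpos \<alpha> by (intro powr_mono') auto
    have p6: "(q powr (1/3))^6 = q^2"
    proof -
      have "(q powr (1/3))^6 = (q powr (1/3)) powr (real 6)"
        using qpos by (subst powr_realpow) auto
      also have "\<dots> = q powr (real 2)" by (simp add: powr_powr)
      also have "\<dots> = q^2" using qpos by (subst powr_realpow) auto
      finally show ?thesis .
    qed
    have "\<rho>^6 \<le> (n * q powr (1/3))^6"
    proof -
      have "\<rho>^6 \<le> n^4 * M^2 / real m"
      proof -
        have "real m * \<rho>^6 \<le> 3 * real m * \<rho>^6" using mpos \<rho>0 by simp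
        hence "real m * \<rho>^6 \<le> n^4 * M^2" using key by linarith
        thus ?thesis using mpos by (simp add: field_simps)
      qed
      also have "n^4 * M^2 / real m = (n * q powr (1/3))^6"
      proof -
        have "(n * q powr (1/3))^6 = n^6 * q^2" by (simp add: power_mult_distrib p6)
        also have "q^2 = M^2 / (n^2 * real m)" unfolding q_def
          by (simp add: power_divide power_mult_distrib)
        finally show ?thesis using n mpos by (simp add: field_simps power2_eq_square power_def)
      qed
      finally show ?thesis .
    qed
    hence "\<rho> ^ Suc 5 \<le> (n * q powr (1/3)) ^ Suc 5" by (simp add: numeral_eq_Suc)
    hence "\<rho> \<le> n * q powr (1/3)"
      by (rule power_le_imp_le_base) (use n in simp)
    also have "\<dots> \<le> n * q powr \<alpha>" using q13 n by (intro mult_left_mono) auto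
    finally show ?thesis using T by simp
  qed
  moreover have "n powr (1 - \<alpha>) * M powr \<alpha> > 0" using n M by simp
  ultimately show ?thesis unfolding T_def by (simp add: pos_divide_le_eq)
qed


definition orthn :: "(nat \<Rightarrow> 'a::real_inner) \<Rightarrow> nat \<Rightarrow> bool" where
  "orthn e n \<longleftrightarrow> (\<forall>i<n. \<forall>j<n. inner (e i) (e j) = (if i = j then 1 else 0))"

lemma orthn_inner_sum:
  assumes "orthn e n" "j < n" "A \<subseteq> {..<n}"
  shows "inner (\<Sum>i\<in>A. c i *\<^sub>R e i) (e j) = (if j \<in> A then c j else 0)"
proof -
  have "inner (\<Sum>i\<in>A. c i *\<^sub>R e i) (e j) = (\<Sum>i\<in>A. c i * (if i = j then 1 else 0))"
    unfolding inner_sum_left using assms by (intro sum.cong) (auto simp: orthn_def)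
  also have "\<dots> = (if j \<in> A then c j else 0)"
    using assms(3) finite_subset[OF assms(3)] by (simp add: if_distrib sum.delta' cong: if_cong)
  finally show ?thesis .
qed

lemma orthn_exists:
  assumes infdim: "\<not> (\<exists>S :: 'a::real_inner set. finite S \<and> span S = UNIV)"
  shows "\<exists>e :: nat \<Rightarrow> 'a. orthn e n"
proof (induction n)
  case 0 then show ?case by (simp add: orthn_def)
next
  case (Suc n)
  then obtain e :: "nat \<Rightarrow> 'a" where e: "orthn e n" by blast
  have "span (e ` {..<n}) \<noteq> UNIV" using infdim by blast
  then obtain x where x: "x \<notin> span (e ` {..<n})" by blast
  define p where "p = (\<Sum>i\<in>{..<n}. inner x (e i) *\<^sub>R e i)"
  define y where "y = x - p"
  have p_span: "p \<in> span (e ` {..<n})" unfolding p_def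
    by (intro span_sum span_scale span_base) auto
  have y0: "y \<noteq> 0" using x p_span by (auto simp: y_def)
  have yo: "inner y (e j) = 0" if "j < n" for j
  proof -
    have "inner p (e j) = inner x (e j)" unfolding p_def
      using orthn_inner_sum[OF e that, of "{..<n}"] that by simp
    thus ?thesis by (simp add: y_def inner_diff_left)
  qed
  define e' where "e' = e(n := y /\<^sub>R norm y)"
  have nn: "inner (y /\<^sub>R norm y) (y /\<^sub>R norm y) = 1"
    using y0 by (simp add: dot_square_norm)
  have "orthn e' (Suc n)"
    unfolding orthn_def
  proof (intro allI impI)
    fix i j assume i: "i < Suc n" and j: "j < Suc n"
    show "inner (e' i) (e' j) = (if i = j then 1 else 0)"
    proof (cases "i = n")
      case True
      show ?thesis
      proof (cases "j = n")
        case False hence "j < n" using j by simp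
        thus ?thesis using True False yo by (simp add: e'_def)
      qed (use True nn e'_def in simp)
    next
      case False
      hence i': "i < n" using i by simp
      show ?thesis
      proof (cases "j = n")
        case True
        thus ?thesis using False yo[OF i'] by (simp add: e'_def inner_commute)
      next
        case False' : False
        hence "j < n" using j by simp
        thus ?thesis using e i' False False' by (simp add: e'_def orthn_def)
      qed
    qed
  qed
  thus ?case by blast
qed

lemma lower_arith:
  fixes m :: nat and \<alpha> M :: real
  assumes m: "m \<ge> 1" and \<alpha>: "0 < \<alpha>" "\<alpha> \<le> 1/3" and M: "0 < M" "M \<le> 2 * real m"
  shows "1/2 * real m powr (- \<alpha> / 2) \<le> sqrt (real m) / (sqrt (2 * real m) powr (1 - \<alpha>) * M powr \<alpha>)"
proof -
  have mpos: "real m > 0" using m by simp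
  have den: "sqrt (2 * real m) powr (1 - \<alpha>) * M powr \<alpha> \<le> sqrt (2 * real m) powr (1 - \<alpha>) * (2 * real m) powr \<alpha>"
    using M \<alpha> by (intro mult_left_mono powr_mono2) auto
  have e1: "sqrt (2 * real m) powr (1 - \<alpha>) = (2 * real m) powr ((1 - \<alpha>)/2)"
    using mpos by (simp add: powr_half_sqrt[symmetric] powr_powr)
  have "sqrt (2 * real m) powr (1 - \<alpha>) * (2 * real m) powr \<alpha> = (2 * real m) powr ((1 + \<alpha>)/2)"
    unfolding e1 by (simp add: powr_add[symmetric] field_simps)
  also have "\<dots> = 2 powr ((1 + \<alpha>)/2) * real m powr ((1 + \<alpha>)/2)" by (simp add: powr_mult)
  also have "\<dots> \<le> 2 * real m powr ((1 + \<alpha>)/2)"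
  proof -
    have "2 powr ((1 + \<alpha>)/2) \<le> 2 powr 1" using \<alpha> by (intro powr_mono) auto
    thus ?thesis by (intro mult_right_mono) auto
  qed
  finally have den2: "sqrt (2 * real m) powr (1 - \<alpha>) * M powr \<alpha> \<le> 2 * real m powr ((1 + \<alpha>)/2)"
    using den by linarith
  have dpos: "sqrt (2 * real m) powr (1 - \<alpha>) * M powr \<alpha> > 0" using mpos M by simp
  have "1/2 * real m powr (- \<alpha> / 2) = real m powr (1/2) / (2 * real m powr ((1 + \<alpha>)/2))"
    using mpos by (simp add: powr_diff[symmetric] field_simps)
  also have "\<dots> \<le> real m powr (1/2) / (sqrt (2 * real m) powr (1 - \<alpha>) * M powr \<alpha>)"
    using mpos M by (intro divide_left_mono den2 mult_pos_pos dpos) auto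
  also have "real m powr (1/2) = sqrt (real m)" by (simp add: powr_half_sqrt)
  finally show ?thesis .
qed


lemma lower_example:
  fixes m :: nat
  assumes infdim: "\<not> (\<exists>S :: 'a::real_inner set. finite S \<and> span S = UNIV)" and m: "m \<ge> 1"
  shows "\<exists>D f (r :: nat \<Rightarrow> 'a). dictionary D \<and> f \<noteq> 0 \<and> A1_scales D f \<noteq> {} \<and> pga_realization D f r
     \<and> norm f = sqrt (2 * real m) \<and> norm (r m) = sqrt (real m) \<and> A1_norm D f \<le> 2 * real m"
proof -
  define N where "N = 2 * m"
  obtain e :: "nat \<Rightarrow> 'a" where e: "orthn e N" using orthn_exists[OF infdim] by blast
  have ee: "inner (e i) (e j) = (if i = j then 1 else 0)" if "i < N" "j < N" for i j
    using e that by (simp add: orthn_def)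
  have ne: "norm (e i) = 1" if "i < N" for i
    using ee[OF that that] using norm_ge_zero[of "e i"] by (simp add: dot_square_norm power2_eq_1_iff)
  define U where "U = {u. norm u = 1 \<and> (\<forall>i<N. inner u (e i) = 0)}"
  define D where "D = e ` {..<N} \<union> (\<lambda>i. - e i) ` {..<N} \<union> U"
  define r where "r k = (\<Sum>i\<in>{k..<N}. e i)" for k
  define f where "f = r 0"
  have sum1: "(\<Sum>i\<in>A. e i) = (\<Sum>i\<in>A. 1 *\<^sub>R e i)" for A by simp
  have innr: "inner (r k) (e j) = (if j \<in> {k..<N} then 1 else 0)" if "j < N" for k j
    unfolding r_def sum1 by (rule orthn_inner_sum[OF e that]) auto
  have innU: "inner (r k) u = 0" if "u \<in> U" for k u
    using that unfolding r_def U_def by (auto simp: inner_sum_left inner_sum_right inner_commute intro!: sum.neutral)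
  have nr: "norm (r k) ^ 2 = real (card {k..<N})" for k
  proof -
    have "norm (r k) ^ 2 = (\<Sum>j\<in>{k..<N}. inner (r k) (e j))"
      unfolding power2_norm_eq_inner by (subst (2) r_def) (simp add: inner_sum_right)
    also have "\<dots> = (\<Sum>j\<in>{k..<N}. 1)" by (intro sum.cong) (auto simp: innr)
    finally show ?thesis by simp
  qed
  have nr': "norm (r k) = sqrt (real (card {k..<N}))" for k
    using nr[of k] by (metis norm_ge_zero real_sqrt_unique)
  have dict: "dictionary D"
    unfolding dictionary_def
  proof (intro conjI ballI)
    fix g assume "g \<in> D" thus "norm g = 1" by (auto simp: D_def U_def ne)
  next
    fix g assume "g \<in> D" thus "- g \<in> D" by (auto simp: D_def U_def)
  next
    have "x \<in> span D" for x
    proof -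
      define p where "p = (\<Sum>i\<in>{..<N}. inner x (e i) *\<^sub>R e i)"
      define y where "y = x - p"
      have p_span: "p \<in> span D" unfolding p_def
        by (intro span_sum span_scale span_base) (auto simp: D_def)
      have yo: "inner y (e j) = 0" if "j < N" for j
      proof -
        have "inner p (e j) = inner x (e j)" unfolding p_def
          using orthn_inner_sum[OF e that, of "{..<N}"] that by simp
        thus ?thesis by (simp add: y_def inner_diff_left)
      qed
      have "y \<in> span D"
      proof (cases "y = 0")
        case True thus ?thesis by (simp add: span_zero)
      next
        case False
        have "y /\<^sub>R norm y \<in> D" using False yo by (auto simp: D_def U_def)
        hence "norm y *\<^sub>R (y /\<^sub>R norm y) \<in> span D" by (intro span_scale span_base)
        thus ?thesis using False by simp
      qed
      hence "p + y \<in> span D" using p_span by (intro span_add)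
      thus ?thesis by (simp add: y_def)
    qed
    hence "span D = UNIV" by auto
    thus "closure (span D) = UNIV" by simp
  qed
  have Npos: "N > 0" using m by (simp add: N_def)
  have nf: "norm f = sqrt (2 * real m)" by (simp add: f_def nr' N_def)
  have f0: "f \<noteq> 0" using nf m by auto
  have rm: "norm (r m) = sqrt (real m)" by (simp add: nr' N_def)
  have scN: "real N \<in> A1_scales D f"
  proof -
    have "inverse (real N) *\<^sub>R f = (\<Sum>i\<in>{0..<N}. inverse (real N) *\<^sub>R e i)"
      by (simp add: f_def r_def scaleR_sum_right)
    also have "\<dots> \<in> convex hull D"
      by (rule convex_sum) (use Npos in \<open>auto simp: D_def intro: hull_inc\<close>)
    finally have "inverse (real N) *\<^sub>R f \<in> A1 D" unfolding A1_def
      using closure_subset by blast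
    thus ?thesis using Npos by (simp add: A1_scales_def)
  qed
  have A1le: "A1_norm D f \<le> 2 * real m"
    unfolding A1_norm_def using scN
    by (intro cInf_lower[THEN order_trans]) (auto simp: bdd_below_def A1_scales_def N_def intro!: exI[of _ 0])
  have pga: "pga_realization D f r"
    unfolding pga_realization_def
  proof (intro conjI allI)
    show "r 0 = f" by (simp add: f_def)
  next
    fix k
    show "\<exists>g\<in>D. (\<forall>h\<in>D. inner (r k) h \<le> inner (r k) g) \<and> r (Suc k) = r k - inner (r k) g *\<^sub>R g"
    proof (cases "k < N")
      case True
      have "e k \<in> D" using True by (simp add: D_def)
      moreover have "inner (r k) h \<le> inner (r k) (e k)" if "h \<in> D" for h
        using that True by (auto simp: D_def innr innU)
      moreover have "r (Suc k) = r k - inner (r k) (e k) *\<^sub>R e k"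
      proof -
        have "inner (r k) (e k) = 1" using True by (simp add: innr)
        moreover have "r k = e k + r (Suc k)" using True by (simp add: r_def sum.atLeast_Suc_lessThan)
        ultimately show ?thesis by simp
      qed
      ultimately show ?thesis by blast
    next
      case False
      have "e 0 \<in> D" using Npos by (simp add: D_def)
      moreover have "r k = 0" "r (Suc k) = 0" using False by (simp_all add: r_def)
      ultimately show ?thesis by auto
    qed
  qed
  show ?thesis using dict f0 scN pga nf rm A1le by blast
qed

theorem mainTheorem3:
  fixes m :: nat and \<alpha> :: real
  assumes infdim: "\<not> (\<exists>S :: ('a::{real_inner, complete_space}) set. finite S \<and> span S = UNIV)"
    and m: "m \<ge> 1"
    and \<alpha>: "0 < \<alpha>" "\<alpha> \<le> 1/3"
  shows "ereal (1/2 * real m powr (- \<alpha> / 2)) \<le> gamma_pga m \<alpha> TYPE('a)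
       \<and> gamma_pga m \<alpha> TYPE('a) \<le> ereal (real m powr (- \<alpha> / 2))"
proof
  obtain D f and r :: "nat \<Rightarrow> 'a" where ex: "dictionary D" "f \<noteq> 0" "A1_scales D f \<noteq> {}"
    "pga_realization D f r" "norm f = sqrt (2 * real m)" "norm (r m) = sqrt (real m)"
    "A1_norm D f \<le> 2 * real m"
    using lower_example[OF infdim m] by blast
  have "norm f \<le> A1_norm D f" by (rule pga_upper(2)[OF ex(1-4)])
  hence Mpos: "A1_norm D f > 0" using ex(2) by (metis zero_less_norm_iff order_less_le_trans)
  have "1/2 * real m powr (- \<alpha> / 2) \<le> norm (r m) / (norm f powr (1 - \<alpha>) * A1_norm D f powr \<alpha>)"
    unfolding ex(5,6) by (rule lower_arith[OF m \<alpha> Mpos ex(7)])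
  hence "ereal (1/2 * real m powr (- \<alpha> / 2)) \<le>
     (case (D, f, r) of (D, f, r) \<Rightarrow> ereal (norm (r m) / (norm f powr (1 - \<alpha>) * A1_norm D f powr \<alpha>)))"
    by simp
  thus "ereal (1/2 * real m powr (- \<alpha> / 2)) \<le> gamma_pga m \<alpha> TYPE('a)"
    unfolding gamma_pga_def by (rule SUP_upper2[rotated]) (use ex in auto)
next
  show "gamma_pga m \<alpha> TYPE('a) \<le> ereal (real m powr (- \<alpha> / 2))"
    unfolding gamma_pga_def
  proof (rule SUP_least)
    fix x assume "x \<in> {(D :: 'a set, f :: 'a, r :: nat \<Rightarrow> 'a).
                 dictionary D \<and> f \<noteq> 0 \<and> A1_scales D f \<noteq> {} \<and> pga_realization D f r}"
    then obtain D f r where x: "x = (D, f, r)" and h: "dictionary D" "f \<noteq> 0" "A1_scales D f \<noteq> {}"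
      "pga_realization D f r" by auto
    have "norm (r m) / (norm f powr (1 - \<alpha>) * A1_norm D f powr \<alpha>) \<le> real m powr (- \<alpha> / 2)"
      using h(2) pga_upper(1)[OF h, of m] pga_upper(2)[OF h] pga_upper(3)[OF h, of m] m \<alpha>
      by (intro final_upper) auto
    thus "(case x of (D, f, r) \<Rightarrow> ereal (norm (r m) / (norm f powr (1 - \<alpha>) * A1_norm D f powr \<alpha>)))
          \<le> ereal (real m powr (- \<alpha> / 2))" by (simp add: x)
  qed
qed

end
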